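(* Let $R$ be a commutative ring and let $I, I_1,\ldots,I_n$ be ideals of $R$ with $I\subseteq \bigcup_{k=1}^{n} I_k$. If all but at most two of the ideals $I_1,\ldots,I_n$ are radical ideals, then $I\subseteq I_k$ for some $k$.
   Context: All rings are commutative with $1\neq 0$. An ideal $J$ is radical if $J=\sqrt{J}$. *)

theory Defs
  imports "HOL-Algebra.Algebra"
begin

definition ideal_radical :: "('a, 'b) ring_scheme \<Rightarrow> 'a set \<Rightarrow> 'a set" where
  "ideal_radical R J = {x \<in> carrier R. \<exists>m::nat. x [^]\<^bsub>R\<^esub> m \<in> J}"

definition radical_ideal :: "('a, 'b) ring_scheme \<Rightarrow> 'a set \<Rightarrow> bool" where
  "radical_ideal R J \<longleftrightarrow> ideal J R \<and> ideal_radical R J = J"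

end

theory Submission
  imports Defs
begin

definition pr :: "('a, 'b) ring_scheme \<Rightarrow> 'a set \<Rightarrow> bool" where
  "pr R P \<longleftrightarrow> ideal P R \<and> (\<forall>x\<in>carrier R. \<forall>y\<in>carrier R. x \<otimes>\<^bsub>R\<^esub> y \<in> P \<longrightarrow> x \<in> P \<or> y \<in> P)"

definition rad :: "('a, 'b) ring_scheme \<Rightarrow> 'a set \<Rightarrow> bool" where
  "rad R P \<longleftrightarrow> ideal P R \<and> (\<forall>x\<in>carrier R. \<forall>m::nat. x [^]\<^bsub>R\<^esub> m \<in> P \<longrightarrow> x \<in> P)"

context cring begin

lemma subgroup_addI:
  assumes "I \<subseteq> carrier R" "\<zero> \<in> I" "\<And>x y. x \<in> I \<Longrightarrow> y \<in> I \<Longrightarrow> x \<oplus> y \<in> I"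
    "\<And>x. x \<in> I \<Longrightarrow> \<ominus> x \<in> I"
  shows "subgroup I (add_monoid R)"
  using assms by (intro subgroup.intro) (auto simp: a_inv_def[symmetric])

lemma colon_ideal:
  assumes "ideal P R" "c \<in> carrier R"
  shows "ideal {z\<in>carrier R. z \<otimes> c \<in> P} R"
proof (rule idealI)
  interpret P: ideal P R by fact
  show "ring R" by (rule ring_axioms)
  show "subgroup {z \<in> carrier R. z \<otimes> c \<in> P} (add_monoid R)"
  proof (rule subgroup_addI)
    show "\<zero> \<in> {z \<in> carrier R. z \<otimes> c \<in> P}" using assms by simp
    fix x y assume "x \<in> {z \<in> carrier R. z \<otimes> c \<in> P}" "y \<in> {z \<in> carrier R. z \<otimes> c \<in> P}"
    then show "x \<oplus> y \<in> {z \<in> carrier R. z \<otimes> c \<in> P}" using assms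
      by (simp add: l_distr P.a_closed)
  next
    fix x assume "x \<in> {z \<in> carrier R. z \<otimes> c \<in> P}"
    then show "\<ominus> x \<in> {z \<in> carrier R. z \<otimes> c \<in> P}" using assms
      by (simp add: l_minus P.a_inv_closed)
  qed auto
  fix a x assume "a \<in> {z \<in> carrier R. z \<otimes> c \<in> P}" "x \<in> carrier R"
  then show "x \<otimes> a \<in> {z \<in> carrier R. z \<otimes> c \<in> P}"
    "a \<otimes> x \<in> {z \<in> carrier R. z \<otimes> c \<in> P}" using assms
  proof -
    have "x \<otimes> a \<otimes> c = x \<otimes> (a \<otimes> c)" using assms \<open>x \<in> carrier R\<close> \<open>a \<in> {z \<in> carrier R. z \<otimes> c \<in> P}\<close> by (simp add: m_assoc)
    moreover have "a \<otimes> x = x \<otimes> a" using \<open>x \<in> carrier R\<close> \<open>a \<in> {z \<in> carrier R. z \<otimes> c \<in> P}\<close> by (simp add: m_comm)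
    ultimately show "x \<otimes> a \<in> {z \<in> carrier R. z \<otimes> c \<in> P}" "a \<otimes> x \<in> {z \<in> carrier R. z \<otimes> c \<in> P}"
      using assms \<open>x \<in> carrier R\<close> \<open>a \<in> {z \<in> carrier R. z \<otimes> c \<in> P}\<close> by (auto simp: P.I_l_closed)
  qed
qed

lemma colon_rad:
  assumes "rad R P" "c \<in> carrier R"
  shows "rad R {z\<in>carrier R. z \<otimes> c \<in> P}"
  unfolding rad_def
proof (intro conjI ballI allI impI)
  interpret P: ideal P R using assms unfolding rad_def by auto
  show "ideal {z\<in>carrier R. z \<otimes> c \<in> P} R" using colon_ideal P.is_ideal assms by blast
  fix x and m :: nat assume x: "x \<in> carrier R" "x [^] m \<in> {z \<in> carrier R. z \<otimes> c \<in> P}"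
  have "x \<otimes> c \<in> P"
  proof (cases m)
    case 0 then show ?thesis using x assms by (simp add: P.I_l_closed)
  next
    case (Suc k)
    have "(x \<otimes> c) [^] m = x [^] m \<otimes> c [^] m" using x assms by (intro nat_pow_distrib) auto
    also have "\<dots> = (x [^] m \<otimes> c) \<otimes> c [^] k"
      using x assms Suc by (simp add: m_assoc m_comm m_lcomm nat_pow_Suc2 del: nat_pow_Suc)
    also have "\<dots> \<in> P" using x assms by (simp add: P.I_r_closed)
    finally show "x \<otimes> c \<in> P" using assms x unfolding rad_def by blast
  qed
  then show "x \<in> {z \<in> carrier R. z \<otimes> c \<in> P}" using x by simp
qed


lemma chain_union_rad:
  assumes "C \<noteq> {}" "subset.chain {P. rad R P \<and> J \<subseteq> P \<and> a \<notin> P} C"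
  shows "\<Union>C \<in> {P. rad R P \<and> J \<subseteq> P \<and> a \<notin> P}"
proof -
  have CF: "\<And>P. P \<in> C \<Longrightarrow> rad R P \<and> J \<subseteq> P \<and> a \<notin> P"
    using assms(2) unfolding subset_chain_def by blast
  have ch: "\<And>P Q. P \<in> C \<Longrightarrow> Q \<in> C \<Longrightarrow> P \<subseteq> Q \<or> Q \<subseteq> P"
    using assms(2) unfolding subset_chain_def by blast
  have idl: "\<And>P. P \<in> C \<Longrightarrow> ideal P R" using CF unfolding rad_def by blast
  obtain P0 where P0: "P0 \<in> C" using assms(1) by blast
  have "ideal (\<Union>C) R"
  proof (rule idealI)
    show "ring R" by (rule ring_axioms)
    show "subgroup (\<Union>C) (add_monoid R)"
    proof (rule subgroup_addI)
      show "\<Union>C \<subseteq> carrier R"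
      proof
        fix x assume "x \<in> \<Union>C"
        then obtain P where "P \<in> C" "x \<in> P" by blast
        then show "x \<in> carrier R" using ideal.Icarr[OF idl] by blast
      qed
      show "\<zero> \<in> \<Union>C" using P0 additive_subgroup.zero_closed[OF ideal.axioms(1)[OF idl[OF P0]]] by blast
    next
      fix x y assume "x \<in> \<Union>C" "y \<in> \<Union>C"
      then obtain P Q where PQ: "P \<in> C" "Q \<in> C" "x \<in> P" "y \<in> Q" by blast
      show "x \<oplus> y \<in> \<Union>C"
      proof (cases "P \<subseteq> Q")
        case True
        then have "x \<oplus> y \<in> Q" using PQ additive_subgroup.a_closed[OF ideal.axioms(1)[OF idl[OF PQ(2)]]] by blast
        then show ?thesis using PQ by blast
      next
        case False then have "Q \<subseteq> P" using ch[OF PQ(1,2)] by blast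
        then have "x \<oplus> y \<in> P" using PQ additive_subgroup.a_closed[OF ideal.axioms(1)[OF idl[OF PQ(1)]]] by blast
        then show ?thesis using PQ by blast
      qed
    next
      fix x assume "x \<in> \<Union>C"
      then obtain P where P: "P \<in> C" "x \<in> P" by blast
      then have "\<ominus> x \<in> P" using additive_subgroup.a_inv_closed[OF ideal.axioms(1)[OF idl[OF P(1)]]] by blast
      then show "\<ominus> x \<in> \<Union>C" using P by blast
    qed
  next
    fix b x assume "b \<in> \<Union>C" "x \<in> carrier R"
    then obtain P where P: "P \<in> C" "b \<in> P" by blast
    have "x \<otimes> b \<in> P" "b \<otimes> x \<in> P"
      using ideal.I_l_closed[OF idl[OF P(1)] P(2) \<open>x \<in> carrier R\<close>]
        ideal.I_r_closed[OF idl[OF P(1)] P(2) \<open>x \<in> carrier R\<close>] by auto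
    then show "x \<otimes> b \<in> \<Union>C" "b \<otimes> x \<in> \<Union>C" using P by blast+
  qed
  moreover have "\<forall>x\<in>carrier R. \<forall>m::nat. x [^] m \<in> \<Union>C \<longrightarrow> x \<in> \<Union>C"
  proof (intro ballI allI impI)
    fix x and m :: nat assume "x \<in> carrier R" "x [^] m \<in> \<Union>C"
    then obtain P where P: "P \<in> C" "x [^] m \<in> P" by blast
    then have "x \<in> P" using CF[OF P(1)] \<open>x \<in> carrier R\<close> unfolding rad_def by blast
    then show "x \<in> \<Union>C" using P by blast
  qed
  moreover have "J \<subseteq> \<Union>C" using CF P0 by blast
  moreover have "a \<notin> \<Union>C" using CF by blast
  ultimately show ?thesis unfolding rad_def by blast
qed

lemma exists_pr:
  assumes J: "rad R J" and a: "a \<in> carrier R" "a \<notin> J"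
  shows "\<exists>P. pr R P \<and> J \<subseteq> P \<and> a \<notin> P"
proof -
  let ?F = "{P. rad R P \<and> J \<subseteq> P \<and> a \<notin> P}"
  have "J \<in> ?F" using assms by simp
  then have "?F \<noteq> {}" by blast
  then have "\<exists>M\<in>?F. \<forall>Y\<in>?F. M \<subseteq> Y \<longrightarrow> Y = M"
    by (rule subset_Zorn_nonempty) (rule chain_union_rad)
  then obtain P where P: "P \<in> ?F" and mx0: "\<forall>Y\<in>?F. P \<subseteq> Y \<longrightarrow> Y = P"
    by (elim bexE)
  have mx: "\<And>Y. Y \<in> ?F \<Longrightarrow> P \<subseteq> Y \<Longrightarrow> Y = P" using mx0 by blast
  have Pr: "rad R P" "J \<subseteq> P" "a \<notin> P" using P by simp_all
  then have Pi: "ideal P R" unfolding rad_def by blast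
  interpret Pi: ideal P R by (rule Pi)
  have colsup: "P \<subseteq> {z\<in>carrier R. z \<otimes> c \<in> P}" if "c \<in> carrier R" for c
    using that Pi.I_r_closed Pi.Icarr by blast
  have key: "a \<otimes> c \<in> P" if c: "c \<in> carrier R" "d \<in> carrier R" "d \<otimes> c \<in> P" "d \<notin> P" for c d
  proof (rule ccontr)
    assume na: "a \<otimes> c \<notin> P"
    let ?Q = "{z\<in>carrier R. z \<otimes> c \<in> P}"
    have "?Q \<in> ?F" using colon_rad[OF Pr(1) c(1)] Pr(2) colsup[OF c(1)] na by auto
    then have "?Q = P" using mx colsup[OF c(1)] by blast
    then show False using c by blast
  qed
  have "\<forall>x\<in>carrier R. \<forall>y\<in>carrier R. x \<otimes> y \<in> P \<longrightarrow> x \<in> P \<or> y \<in> P"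
  proof (intro ballI impI)
    fix x y assume xy: "x \<in> carrier R" "y \<in> carrier R" "x \<otimes> y \<in> P"
    show "x \<in> P \<or> y \<in> P"
    proof (rule ccontr)
      assume n: "\<not> (x \<in> P \<or> y \<in> P)"
      have "y \<otimes> x \<in> P" using xy by (simp add: m_comm)
      then have ax: "a \<otimes> x \<in> P" using key[of x y] xy n by blast
      let ?Q = "{z\<in>carrier R. z \<otimes> a \<in> P}"
      have "x \<otimes> a \<in> P" using ax xy a by (simp add: m_comm)
      then have xQ: "x \<in> ?Q" using xy by blast
      have "?Q \<noteq> P" using xQ n by blast
      then have "?Q \<notin> ?F" using mx colsup[OF a(1)] by blast
      then have "a \<in> ?Q" using colon_rad[OF Pr(1) a(1)] Pr(2) colsup[OF a(1)] by auto
      then have "a [^] (2::nat) \<in> P" using a by (simp add: numeral_2_eq_2)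
      then have "a \<in> P" using Pr(1) a unfolding rad_def by blast
      then show False using Pr by blast
    qed
  qed
  then show ?thesis using Pi Pr unfolding pr_def by blast
qed

lemma sum_cancel_l:
  assumes "ideal J R" "x \<in> carrier R" "y \<in> carrier R" "x \<oplus> y \<in> J" "x \<in> J"
  shows "y \<in> J"
proof -
  interpret J: ideal J R by fact
  have "\<ominus> x \<oplus> (x \<oplus> y) = y" using assms(2,3) by (simp add: a_assoc[symmetric] l_neg)
  moreover have "\<ominus> x \<oplus> (x \<oplus> y) \<in> J" using assms(4,5) J.a_inv_closed J.a_closed by blast
  ultimately show ?thesis by simp
qed

lemma sum_cancel_r:
  assumes "ideal J R" "x \<in> carrier R" "y \<in> carrier R" "x \<oplus> y \<in> J" "y \<in> J"
  shows "x \<in> J"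
  using sum_cancel_l[OF assms(1,3,2)] assms(2-5) by (simp add: a_comm)

lemma prod_avoid:
  assumes "finite A" "A \<noteq> {}" "pr R P" "ideal I R" "\<forall>j\<in>A. ideal (Is j) R"
    "\<forall>j\<in>A. f j \<in> carrier R \<and> f j \<in> I \<and> f j \<in> Is j \<and> f j \<notin> P"
  shows "\<exists>p\<in>carrier R. p \<in> I \<and> p \<notin> P \<and> (\<forall>j\<in>A. p \<in> Is j)"
  using assms(1,2,5,6)
proof (induction A rule: finite_ne_induct)
  case (singleton x)
  then show ?case by blast
next
  case (insert x F)
  then obtain p where p: "p \<in> carrier R" "p \<in> I" "p \<notin> P" "\<forall>j\<in>F. p \<in> Is j" by auto
  have fx: "f x \<in> carrier R" "f x \<in> I" "f x \<in> Is x" "f x \<notin> P" using insert.prems by auto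
  have "f x \<otimes> p \<in> carrier R" using fx p by simp
  moreover have "f x \<otimes> p \<in> I" using ideal.I_r_closed[OF assms(4) fx(2) p(1)] .
  moreover have "f x \<otimes> p \<notin> P" using assms(3) fx p unfolding pr_def by blast
  moreover have "\<forall>j\<in>insert x F. f x \<otimes> p \<in> Is j"
  proof
    fix j assume j: "j \<in> insert x F"
    show "f x \<otimes> p \<in> Is j"
    proof (cases "j = x")
      case True then show ?thesis using ideal.I_r_closed[OF _ fx(3) p(1)] insert.prems by auto
    next
      case False then have "j \<in> F" using j by auto
      then show ?thesis using ideal.I_l_closed[OF _ _ fx(1)] insert.prems p(4) by auto
    qed
  qed
  ultimately show ?case by blast
qed

lemma avoid:
  "finite K \<Longrightarrow> ideal I R \<Longrightarrow> \<forall>k\<in>K. ideal (Is k) R \<Longrightarrow> I \<subseteq> (\<Union>k\<in>K. Is k)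
   \<Longrightarrow> card {k\<in>K. \<not> pr R (Is k)} \<le> 2 \<Longrightarrow> \<exists>k\<in>K. I \<subseteq> Is k"
proof (induction "card K" arbitrary: K rule: less_induct)
  case less
  note fin = less.prems(1) and II = less.prems(2) and idl = less.prems(3)
    and cov = less.prems(4) and cd = less.prems(5)
  show ?case
  proof (cases "\<exists>k\<in>K. I \<subseteq> (\<Union>j\<in>K - {k}. Is j)")
    case True
    then obtain k where k: "k \<in> K" "I \<subseteq> (\<Union>j\<in>K - {k}. Is j)" by blast
    have "card (K - {k}) < card K" using k fin by (intro card_Diff1_less)
    moreover have "card {j\<in>K - {k}. \<not> pr R (Is j)} \<le> 2"
      using cd card_mono[of "{k\<in>K. \<not> pr R (Is k)}" "{j\<in>K - {k}. \<not> pr R (Is j)}"] fin by force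
    ultimately obtain j where "j \<in> K - {k}" "I \<subseteq> Is j"
      using less.hyps[of "K - {k}"] fin II idl k(2) by blast
    then show ?thesis by blast
  next
    case False
    then have "\<forall>k\<in>K. \<exists>a. a \<in> I \<and> a \<notin> (\<Union>j\<in>K - {k}. Is j)" by blast
    then have "\<exists>af. \<forall>k\<in>K. af k \<in> I \<and> af k \<notin> (\<Union>j\<in>K - {k}. Is j)"
      by (rule bchoice)
    then obtain af where af: "\<forall>k\<in>K. af k \<in> I \<and> af k \<notin> (\<Union>j\<in>K - {k}. Is j)"
      by blast
    have afc: "af k \<in> carrier R" if "k \<in> K" for k using af that ideal.Icarr[OF II] by blast
    have afk: "af k \<in> Is k" if "k \<in> K" for k
    proof -
      have "af k \<in> I" using af that by blast
      then obtain j where j: "j \<in> K" "af k \<in> Is j" using cov by blast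
      show ?thesis
      proof (cases "j = k")
        case True then show ?thesis using j by simp
      next
        case False
        then have "j \<in> K - {k}" using j by simp
        then show ?thesis using af that j(2) by blast
      qed
    qed
    have afn: "af k \<notin> Is j" if "k \<in> K" "j \<in> K" "j \<noteq> k" for k j using af that by blast
    have z: "\<zero> \<in> I" using additive_subgroup.zero_closed[OF ideal.axioms(1)[OF II]] .
    consider "K = {}" | k where "K = {k}" | k1 k2 where "K = {k1, k2}" "k1 \<noteq> k2" | "card K \<ge> 3"
    proof -
      consider "card K = 0" | "card K = Suc 0" | "card K = 2" | "card K \<ge> 3" by linarith
      then show ?thesis
      proof cases
        case 1 then have "K = {}" using fin by (simp add: card_eq_0_iff)
        then show ?thesis using that(1) by simp
      next
        case 2 from card_1_singleton_iff[THEN iffD1, OF this] obtain k where "K = {k}" by (elim exE)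
        then show ?thesis using that(2) by simp
      next
        case 3 from card_2_iff[THEN iffD1, OF this] obtain k1 k2 where "K = {k1, k2}" "k1 \<noteq> k2" by (elim exE conjE)
        then show ?thesis using that(3) by simp
      next
        case 4 then show ?thesis using that(4) by simp
      qed
    qed
    then show ?thesis
    proof cases
      case 1 then show ?thesis using cov z by auto
    next
      case 2 then show ?thesis using cov by auto
    next
      case (3 k1 k2)
      have k: "k1 \<in> K" "k2 \<in> K" using 3 by auto
      have x: "af k1 \<oplus> af k2 \<in> I" using af k 
        additive_subgroup.a_closed[OF ideal.axioms(1)[OF II]] by blast
      then have "af k1 \<oplus> af k2 \<in> Is k1 \<or> af k1 \<oplus> af k2 \<in> Is k2" using cov 3 by auto
      then show ?thesis
      proof
        assume "af k1 \<oplus> af k2 \<in> Is k1"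
        then have "af k2 \<in> Is k1" using sum_cancel_l[OF _ afc afc] idl k afk by blast
        then show ?thesis using afn[OF k(2) k(1)] 3 by blast
      next
        assume "af k1 \<oplus> af k2 \<in> Is k2"
        then have "af k1 \<in> Is k2" using sum_cancel_r[OF _ afc afc] idl k afk by blast
        then show ?thesis using afn[OF k(1) k(2)] 3 by blast
      qed
    next
      case 4
      have "\<exists>k0\<in>K. pr R (Is k0)"
      proof (rule ccontr)
        assume "\<not> ?thesis"
        then have "{k\<in>K. \<not> pr R (Is k)} = K" by auto
        then show False using cd 4 by simp
      qed
      then obtain k0 where k0: "k0 \<in> K" "pr R (Is k0)" by blast
      have "K - {k0} \<noteq> {}"
      proof
        assume "K - {k0} = {}"
        then have "K = {k0}" using k0 by blast
        then show False using 4 by simp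
      qed
      obtain p where p: "p \<in> carrier R" "p \<in> I" "p \<notin> Is k0" "\<forall>j\<in>K - {k0}. p \<in> Is j"
      proof -
        have "\<forall>j\<in>K - {k0}. af j \<in> carrier R \<and> af j \<in> I \<and> af j \<in> Is j \<and> af j \<notin> Is k0"
        proof
          fix j assume j: "j \<in> K - {k0}"
          then have "j \<in> K" "k0 \<noteq> j" by auto
          then show "af j \<in> carrier R \<and> af j \<in> I \<and> af j \<in> Is j \<and> af j \<notin> Is k0"
            using afc[of j] afk[of j] afn[of j k0] af k0(1) by blast
        qed
        moreover have "\<forall>j\<in>K - {k0}. ideal (Is j) R" using idl by blast
        ultimately show ?thesis
          using prod_avoid[of "K - {k0}" "Is k0" I Is af] fin \<open>K - {k0} \<noteq> {}\<close> k0(2) II that by blast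
      qed
      have "af k0 \<oplus> p \<in> I" using af k0 p additive_subgroup.a_closed[OF ideal.axioms(1)[OF II]] by blast
      then obtain j where j: "j \<in> K" "af k0 \<oplus> p \<in> Is j" using cov by blast
      show ?thesis
      proof (cases "j = k0")
        case True
        then have "p \<in> Is k0" using sum_cancel_l[OF _ afc[OF k0(1)] p(1)] j idl afk k0 by blast
        then show ?thesis using p by blast
      next
        case False
        then have "af k0 \<in> Is j" using sum_cancel_r[OF _ afc[OF k0(1)] p(1)] j idl p(4) by blast
        then show ?thesis using afn[OF k0(1) j(1) False] by blast
      qed
    qed
  qed
qed

end

theorem theorem2p1:
  fixes R :: "('a, 'b) ring_scheme" (structure)
    and I :: "'a set" and Is :: "nat \<Rightarrow> 'a set" and n :: nat
  assumes "cring R"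
    and "\<one>\<^bsub>R\<^esub> \<noteq> \<zero>\<^bsub>R\<^esub>"
    and "ideal I R"
    and "\<forall>k\<in>{1..n}. ideal (Is k) R"
    and "I \<subseteq> (\<Union>k\<in>{1..n}. Is k)"
    and "card {k\<in>{1..n}. \<not> radical_ideal R (Is k)} \<le> 2"
  shows "\<exists>k\<in>{1..n}. I \<subseteq> Is k"
proof (rule ccontr)
  interpret cring R by fact
  let ?K = "{1..n}"
  assume H: "\<not> (\<exists>k\<in>?K. I \<subseteq> Is k)"
  have "\<forall>k\<in>?K. \<exists>P. radical_ideal R (Is k) \<longrightarrow> pr R P \<and> Is k \<subseteq> P \<and> \<not> I \<subseteq> P"
  proof
    fix k assume k: "k \<in> ?K"
    show "\<exists>P. radical_ideal R (Is k) \<longrightarrow> pr R P \<and> Is k \<subseteq> P \<and> \<not> I \<subseteq> P"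
    proof (cases "radical_ideal R (Is k)")
      case True
      have "rad R (Is k)"
        unfolding rad_def
      proof (intro conjI ballI allI impI)
        show "ideal (Is k) R" using True unfolding radical_ideal_def by blast
        fix x and m :: nat assume "x \<in> carrier R" "x [^] m \<in> Is k"
        then have "x \<in> ideal_radical R (Is k)" unfolding ideal_radical_def by blast
        then show "x \<in> Is k" using True unfolding radical_ideal_def by blast
      qed
      moreover obtain c where c: "c \<in> I" "c \<notin> Is k" using H k by blast
      moreover have "c \<in> carrier R" using c(1) ideal.Icarr[OF assms(3)] by blast
      ultimately obtain P where "pr R P" "Is k \<subseteq> P" "c \<notin> P" using exists_pr by blast
      then show ?thesis using c(1) by blast
    qed simp
  qed
  then have "\<exists>Pf. \<forall>k\<in>?K. radical_ideal R (Is k) \<longrightarrow> pr R (Pf k) \<and> Is k \<subseteq> Pf k \<and> \<not> I \<subseteq> Pf k"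
    by (rule bchoice)
  then obtain Pf where Pf: "\<forall>k\<in>?K. radical_ideal R (Is k) \<longrightarrow> pr R (Pf k) \<and> Is k \<subseteq> Pf k \<and> \<not> I \<subseteq> Pf k"
    by blast
  define Js where "Js k = (if radical_ideal R (Is k) then Pf k else Is k)" for k
  have "\<forall>k\<in>?K. ideal (Js k) R" using Pf assms(4) unfolding Js_def pr_def by auto
  moreover have "I \<subseteq> (\<Union>k\<in>?K. Js k)"
  proof
    fix x assume "x \<in> I"
    then obtain k where k: "k \<in> ?K" "x \<in> Is k" using assms(5) by blast
    have "Is k \<subseteq> Js k" using Pf k(1) unfolding Js_def by auto
    then show "x \<in> (\<Union>k\<in>?K. Js k)" using k by blast
  qed
  moreover have "card {k\<in>?K. \<not> pr R (Js k)} \<le> 2"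
  proof -
    have "{k\<in>?K. \<not> pr R (Js k)} \<subseteq> {k\<in>?K. \<not> radical_ideal R (Is k)}"
      using Pf unfolding Js_def by auto
    then have "card {k\<in>?K. \<not> pr R (Js k)} \<le> card {k\<in>?K. \<not> radical_ideal R (Is k)}"
      by (intro card_mono) auto
    then show ?thesis using assms(6) by linarith
  qed
  ultimately obtain k where k: "k \<in> ?K" "I \<subseteq> Js k" using avoid[of ?K I Js] assms(3) by auto
  show False
  proof (cases "radical_ideal R (Is k)")
    case True then show False using Pf k unfolding Js_def by auto
  next
    case False then show False using H k unfolding Js_def by auto
  qed
qed

end
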